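(* Let $-1<n<1$, $\delta=n+1$, and let $m$ be a minimizer for $f_L(n)$ that is not constant. Then $$\max_\Omega m\ge 1-\delta-2\sqrt{\delta}\sqrt{1-\delta/2}.$$
   Context: $\Omega$ is the flat torus $\mathbb R^d/(L\mathbb Z)^d$, $d\ge2$. $F(m)=\frac14(m^2-1)^2$, $\mathcal F(m)=\frac12\int_\Omega|\nabla m|^2dx+\int_\Omega F(m)dx$ for $m\in H^1(\Omega)$, and $f_L(n)=\inf\{\mathcal F(m):m\in H^1(\Omega),\ L^{-d}\int_\Omega m\,dx=n\}$; a minimizer is an admissible $m$ attaining the infimum (minimizers are smooth). *)

theory Defs
  imports "HOL-Analysis.Analysis"
begin

text \<open>The flat torus R^d/(L Z)^d is modelled by L-periodic functions on real^'d,
  integrated over the fundamental cell [0,L]^d.\<close>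

definition periodic :: "real \<Rightarrow> (real^'d::finite \<Rightarrow> 'a) \<Rightarrow> bool" where
  "periodic L f \<longleftrightarrow> (\<forall>x i. f (x + L *\<^sub>R axis i 1) = f x)"

definition cell :: "real \<Rightarrow> (real^'d::finite) set" where
  "cell L = cbox 0 (\<chi> i. L)"

definition test_fun :: "real \<Rightarrow> (real^'d::finite \<Rightarrow> real) \<Rightarrow> (real^'d \<Rightarrow> real^'d) \<Rightarrow> bool" where
  "test_fun L \<phi> D\<phi> \<longleftrightarrow> periodic L \<phi> \<and>
     (\<forall>x. (\<phi> has_derivative (\<lambda>h. D\<phi> x \<bullet> h)) (at x)) \<and> continuous_on UNIV D\<phi>"

definition weak_grad :: "real \<Rightarrow> (real^'d::finite \<Rightarrow> real) \<Rightarrow> (real^'d \<Rightarrow> real^'d) \<Rightarrow> bool" where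
  "weak_grad L m G \<longleftrightarrow>
     G \<in> borel_measurable (lebesgue_on (cell L)) \<and>
     integrable (lebesgue_on (cell L)) (\<lambda>x. (norm (G x))^2) \<and>
     (\<forall>\<phi> D\<phi>. test_fun L \<phi> D\<phi> \<longrightarrow>
        (\<forall>i. (\<integral>x. m x * (D\<phi> x $ i) \<partial>lebesgue_on (cell L))
             = - (\<integral>x. (G x $ i) * \<phi> x \<partial>lebesgue_on (cell L))))"

definition H1 :: "real \<Rightarrow> (real^'d::finite \<Rightarrow> real) \<Rightarrow> bool" where
  "H1 L m \<longleftrightarrow> periodic L m \<and> m \<in> borel_measurable (lebesgue_on (cell L)) \<and>
     integrable (lebesgue_on (cell L)) (\<lambda>x. (m x)^2) \<and> (\<exists>G. weak_grad L m G)"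

definition Fdw :: "real \<Rightarrow> real" where
  "Fdw u = (1/4) * (u^2 - 1)^2"

text \<open>Energy (in [0,\<infinity>]); the weak gradient is unique a.e., so the INF is over equal values.\<close>
definition energy :: "real \<Rightarrow> (real^'d::finite \<Rightarrow> real) \<Rightarrow> ennreal" where
  "energy L m = (INF G \<in> {G. weak_grad L m G}.
      \<integral>\<^sup>+x. ennreal ((1/2) * (norm (G x))^2 + Fdw (m x)) \<partial>lebesgue_on (cell L))"

definition admissible :: "real \<Rightarrow> real \<Rightarrow> (real^'d::finite \<Rightarrow> real) \<Rightarrow> bool" where
  "admissible L n m \<longleftrightarrow> H1 L m \<and>
     (\<integral>x. m x \<partial>lebesgue_on (cell L)) / L ^ CARD('d) = n"

definition fL :: "'d::finite itself \<Rightarrow> real \<Rightarrow> real \<Rightarrow> ennreal" where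
  "fL TYPE('d) L n = (INF m \<in> {m :: real^'d \<Rightarrow> real. admissible L n m}. energy L m)"

definition minimizer :: "real \<Rightarrow> real \<Rightarrow> (real^'d::finite \<Rightarrow> real) \<Rightarrow> bool" where
  "minimizer L n m \<longleftrightarrow> admissible L n m \<and> energy L m = fL TYPE('d) L n"

end

theory Submission
  imports Defs
begin


lemma trans_inv:
  fixes \<phi> :: "real^'d::finite \<Rightarrow> real"
  assumes cont: "continuous_on UNIV \<phi>" and per: "\<And>x. \<phi> (x + L *\<^sub>R axis i 1) = \<phi> x"
    and h: "0 \<le> h" "h \<le> L"
  shows "integral (cbox 0 (\<chi> j. L)) (\<lambda>x. \<phi> (x + h *\<^sub>R axis i 1)) = integral (cbox 0 (\<chi> j. L)) \<phi>"
proof -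
  define e :: "real^'d" where "e = axis i 1"
  have ie: "\<And>x. x \<bullet> e = x $ i" by (simp add: e_def inner_axis)
  have eB: "e \<in> Basis" by (simp add: e_def Basis_vec_def) (metis)
  have intg: "\<And>a b. \<phi> integrable_on cbox a b"
    by (rule integrable_continuous) (use cont continuous_on_subset in blast)
  define A1 :: "(real^'d) set" where "A1 = cbox 0 (\<chi> j. if j=i then h else L)"
  define A2 :: "(real^'d) set" where "A2 = cbox (\<chi> j. if j=i then h else 0) (\<chi> j. L)"
  define A3 :: "(real^'d) set" where "A3 = cbox (\<chi> j. if j=i then L else 0) (\<chi> j. if j=i then L+h else L)"
  have s1: "integral (cbox 0 (\<chi> j. L)) (\<lambda>x. \<phi> (x + h *\<^sub>R e)) = integral (cbox (h*\<^sub>R e) ((\<chi> j. L) + h *\<^sub>R e)) \<phi>"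
  proof -
    have "integral (cbox (h*\<^sub>R e - h*\<^sub>R e) ((\<chi> j. L) + h*\<^sub>R e - h*\<^sub>R e)) (\<lambda>x. \<phi> (x + h*\<^sub>R e)) = integral (cbox (h*\<^sub>R e) ((\<chi> j. L) + h *\<^sub>R e)) \<phi>"
      by (rule integral_shift_cbox)
    then show ?thesis by simp
  qed
  have c1: "cbox 0 (\<chi> j. L) \<inter> {x. x \<bullet> e \<le> h} = A1"
    using h unfolding A1_def ie by (auto simp: mem_box_cart split: if_splits; smt (verit))
  have c2: "cbox 0 (\<chi> j. L) \<inter> {x. x \<bullet> e \<ge> h} = A2"
    using h unfolding A2_def ie by (auto simp: mem_box_cart split: if_splits; smt (verit))
  have c3: "cbox (h*\<^sub>R e) ((\<chi> j. L) + h *\<^sub>R e) \<inter> {x. x \<bullet> e \<le> L} = A2"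
    using h unfolding A2_def ie by (auto simp: mem_box_cart e_def axis_def split: if_splits; smt (verit))
  have c4: "cbox (h*\<^sub>R e) ((\<chi> j. L) + h *\<^sub>R e) \<inter> {x. x \<bullet> e \<ge> L} = A3"
    using h unfolding A3_def ie by (auto simp: mem_box_cart e_def axis_def split: if_splits; smt (verit))
  have sp1: "integral (cbox 0 (\<chi> j. L)) \<phi> = integral A1 \<phi> + integral A2 \<phi>"
    using integral_split[OF intg eB, of 0 "\<chi> j. L" h] c1 c2 by simp
  have sp2: "integral (cbox (h*\<^sub>R e) ((\<chi> j. L) + h *\<^sub>R e)) \<phi> = integral A2 \<phi> + integral A3 \<phi>"
    using integral_split[OF intg eB, of "h*\<^sub>R e" "(\<chi> j. L) + h *\<^sub>R e" L] c3 c4 by simp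
  have a3: "A3 = cbox (0 + L *\<^sub>R e) ((\<chi> j. if j=i then h else L) + L *\<^sub>R e)"
    unfolding A3_def by (rule arg_cong2[where f=cbox]) (auto simp: vec_eq_iff e_def axis_def)
  have s3: "integral A3 \<phi> = integral A1 \<phi>"
  proof -
    have "integral A3 \<phi> = integral A1 (\<lambda>x. \<phi> (x + L *\<^sub>R e))"
      unfolding a3 A1_def using integral_shift_cbox[of "0 + L *\<^sub>R e" "L *\<^sub>R e" "(\<chi> j. if j=i then h else L) + L *\<^sub>R e" \<phi>]
      by simp
    also have "\<dots> = integral A1 \<phi>" using per by (simp add: e_def)
    finally show ?thesis .
  qed
  show ?thesis using s1 sp1 sp2 s3 by (simp add: e_def)
qed

lemma int_deriv_zero:
  fixes \<phi> :: "real^'d::finite \<Rightarrow> real"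
  assumes per: "periodic L \<phi>" and der: "\<forall>x. (\<phi> has_derivative (\<lambda>h. D\<phi> x \<bullet> h)) (at x)"
    and cD: "continuous_on UNIV D\<phi>" and L: "L > 0"
  shows "integral (cbox 0 (\<chi> j. L)) (\<lambda>x. D\<phi> x $ i) = 0"
proof -
  define e :: "real^'d" where "e = axis i 1"
  define C :: "(real^'d) set" where "C = cbox 0 (\<chi> j. L)"
  define \<psi> where "\<psi> t = integral C (\<lambda>x. \<phi> (x + t *\<^sub>R e))" for t
  have cont: "continuous_on UNIV \<phi>"
    using der by (meson continuous_on_eq_continuous_within has_derivative_continuous)
  have per': "\<And>x. \<phi> (x + L *\<^sub>R axis i 1) = \<phi> x" using per unfolding periodic_def by blast
  have const: "\<psi> t = \<psi> 0" if "t \<in> {-L<..<L}" for t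
  proof (cases "t \<ge> 0")
    case True
    then show ?thesis unfolding \<psi>_def C_def e_def using trans_inv[OF cont per', of t] that by simp
  next
    case False
    have "\<And>x. \<phi> (x + t *\<^sub>R e) = \<phi> (x + (t + L) *\<^sub>R e)"
      using per'[of "x + t *\<^sub>R e" for x] by (simp add: e_def algebra_simps)
    then have "\<psi> t = \<psi> (t + L)" unfolding \<psi>_def by simp
    also have "\<dots> = \<psi> 0" unfolding \<psi>_def C_def e_def using trans_inv[OF cont per', of "t+L"] that False by simp
    finally show ?thesis .
  qed
  have d1: "((\<lambda>t. \<phi> (x + t *\<^sub>R e)) has_field_derivative D\<phi> (x + t *\<^sub>R e) $ i) (at t within UNIV)" for x t
  proof -
    have "((\<lambda>t. x + t *\<^sub>R e) has_derivative (\<lambda>s. s *\<^sub>R e)) (at t)"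
      by (auto intro!: derivative_eq_intros)
    from has_derivative_compose[OF this der[rule_format]]
    have "((\<lambda>t. \<phi> (x + t *\<^sub>R e)) has_derivative (\<lambda>s. D\<phi> (x + t *\<^sub>R e) \<bullet> (s *\<^sub>R e))) (at t)"
      by (simp add: o_def)
    moreover have "(\<lambda>s. D\<phi> (x + t *\<^sub>R e) \<bullet> (s *\<^sub>R e)) = (*) (D\<phi> (x + t *\<^sub>R e) $ i)"
      by (auto simp: e_def inner_axis)
    ultimately show ?thesis by (simp add: has_field_derivative_def)
  qed
  have ccont: "continuous_on (UNIV \<times> C) (\<lambda>(t, x). D\<phi> (x + t *\<^sub>R e) $ i)"
  proof -
    have "continuous_on (UNIV \<times> C) (\<lambda>p. snd p + fst p *\<^sub>R e)"
      by (intro continuous_intros)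
    then have "continuous_on (UNIV \<times> C) (\<lambda>p. D\<phi> (snd p + fst p *\<^sub>R e))"
      using continuous_on_compose2[OF cD] by blast
    then show ?thesis by (simp add: split_beta continuous_on_component)
  qed
  have intg: "\<And>t. (\<lambda>x. \<phi> (x + t *\<^sub>R e)) integrable_on C"
  proof -
    fix t
    have "continuous_on C (\<lambda>x. x + t *\<^sub>R e)"
      by (intro continuous_intros)
    then have "continuous_on C (\<lambda>x. \<phi> (x + t *\<^sub>R e))"
      using continuous_on_compose2[OF cont] by blast
    then show "(\<lambda>x. \<phi> (x + t *\<^sub>R e)) integrable_on C" unfolding C_def by (rule integrable_continuous)
  qed
  have "(\<psi> has_field_derivative integral C (\<lambda>x. D\<phi> (x + 0 *\<^sub>R e) $ i)) (at 0 within UNIV)"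
    unfolding \<psi>_def C_def
    by (rule leibniz_rule_field_derivative[where fx="\<lambda>t x. D\<phi> (x + t *\<^sub>R e) $ i", OF d1 intg[unfolded C_def] ccont[unfolded C_def]])
       auto
  then have D1: "(\<psi> has_field_derivative integral C (\<lambda>x. D\<phi> x $ i)) (at 0)" by simp
  have "((\<lambda>t. \<psi> 0) has_field_derivative 0) (at 0)" by simp
  then have D2: "(\<psi> has_field_derivative 0) (at 0)"
  proof (rule has_field_derivative_transform_within_open[OF _ open_greaterThanLessThan])
    show "0 \<in> {-L<..<L}" using L by simp
    show "\<And>x. x \<in> {-L<..<L} \<Longrightarrow> \<psi> 0 = \<psi> x" using const by metis
  qed
  show ?thesis using DERIV_unique[OF D1 D2] by (simp add: C_def)
qed



lemma leb_hk:
  fixes f :: "real^'d::finite \<Rightarrow> real"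
  assumes "continuous_on (cell L) f"
  shows "integrable (lebesgue_on (cell L)) f"
    "(\<integral>x. f x \<partial>lebesgue_on (cell L)) = integral (cell L) f"
  using assms continuous_imp_integrable[of 0 "\<chi> i. L" f]
    lebesgue_integral_eq_integral[of "cell L" f]
  by (auto simp: cell_def intro: fmeasurableD)

lemma content_cell:
  assumes "L > 0"
  shows "Henstock_Kurzweil_Integration.content (cell L :: (real^'d::finite) set) = L ^ CARD('d)"
proof -
  have "(0::real^'d) \<in> cell L"
    using assms unfolding cell_def by (simp add: mem_box_cart)
  then have "cell L \<noteq> ({} :: (real^'d) set)" by blast
  then show ?thesis unfolding cell_def by (simp add: content_cbox_cart)
qed

lemma const_weak_grad:
  assumes "L > 0"
  shows "weak_grad L (\<lambda>_::real^'d::finite. c) (\<lambda>_. 0)"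
  unfolding weak_grad_def
proof (intro conjI allI impI)
  fix \<phi> :: "real^'d \<Rightarrow> real" and D\<phi> :: "real^'d \<Rightarrow> real^'d" and i :: 'd
  assume t: "test_fun L \<phi> D\<phi>"
  have cD: "continuous_on (cell L) (\<lambda>x. D\<phi> x $ i)"
    using t unfolding test_fun_def
    by (intro continuous_on_component) (auto intro: continuous_on_subset)
  have "(\<integral>x. D\<phi> x $ i \<partial>lebesgue_on (cell L)) = 0"
    using leb_hk(2)[OF cD] int_deriv_zero[of L \<phi> D\<phi> i] t assms
    unfolding test_fun_def cell_def by simp
  then show "(\<integral>x. c * (D\<phi> x $ i) \<partial>lebesgue_on (cell L)) =
         - (\<integral>x. ((0::real^'d) $ i) * \<phi> x \<partial>lebesgue_on (cell L))"
    by simp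
qed auto

lemma const_admissible:
  assumes "L > 0"
  shows "admissible L c (\<lambda>_::real^'d::finite. c)"
proof -
  have "(\<integral>x. c \<partial>lebesgue_on (cell L :: (real^'d) set)) = integral (cell L :: (real^'d) set) (\<lambda>_. c)"
    by (rule leb_hk(2)) simp
  also have "\<dots> = L ^ CARD('d) * c"
    using content_cell[OF assms, where 'd='d] by (simp add: cell_def)
  finally have "(\<integral>x. c \<partial>lebesgue_on (cell L :: (real^'d) set)) = L ^ CARD('d) * c" .
  moreover have "integrable (lebesgue_on (cell L)) (\<lambda>x::real^'d. c^2)"
    using leb_hk(1)[of L "\<lambda>_. c^2"] by simp
  ultimately show ?thesis
    using const_weak_grad[OF assms, of c] assms
    unfolding admissible_def H1_def periodic_def by auto
qed

lemma energy_const_le: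
  assumes "L > 0"
  shows "energy L (\<lambda>_::real^'d::finite. c) \<le> ennreal (Fdw c * L ^ CARD('d))"
proof -
  have "energy L (\<lambda>_::real^'d. c) \<le> (\<integral>\<^sup>+x. ennreal ((1/2) * (norm ((\<lambda>_::real^'d. 0::real^'d) x))^2 + Fdw c) \<partial>lebesgue_on (cell L))"
    unfolding energy_def by (rule INF_lower) (use const_weak_grad[OF assms] in auto)
  also have "\<dots> = (\<integral>\<^sup>+x. ennreal (Fdw c) \<partial>lebesgue_on (cell L :: (real^'d) set))" by simp
  also have "\<dots> = ennreal (\<integral>x. Fdw c \<partial>lebesgue_on (cell L :: (real^'d) set))"
    by (rule nn_integral_eq_integral) (use leb_hk(1)[of L "\<lambda>_. Fdw c"] in \<open>auto simp: Fdw_def\<close>)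
  also have "(\<integral>x. Fdw c \<partial>lebesgue_on (cell L :: (real^'d) set)) = integral (cell L :: (real^'d) set) (\<lambda>_. Fdw c)"
    by (rule leb_hk(2)) simp
  also have "\<dots> = Fdw c * L ^ CARD('d)"
    using content_cell[OF assms, where 'd='d] by (simp add: cell_def mult.commute)
  finally show ?thesis .
qed

lemma energy_ge:
  fixes m :: "real^'d::finite \<Rightarrow> real"
  assumes "continuous_on (cell L) m"
  shows "ennreal (integral (cell L) (\<lambda>x. Fdw (m x))) \<le> energy L m"
proof -
  have cF: "continuous_on (cell L) (\<lambda>x. Fdw (m x))"
    unfolding Fdw_def by (intro continuous_intros assms)
  have "ennreal (integral (cell L) (\<lambda>x. Fdw (m x))) = (\<integral>\<^sup>+x. ennreal (Fdw (m x)) \<partial>lebesgue_on (cell L))"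
    using nn_integral_eq_integral[OF leb_hk(1)[OF cF]] leb_hk(2)[OF cF] by (simp add: Fdw_def)
  also have "\<dots> \<le> energy L m"
    unfolding energy_def
  proof (rule INF_greatest)
    fix G assume "G \<in> {G. weak_grad L m G}"
    show "(\<integral>\<^sup>+x. ennreal (Fdw (m x)) \<partial>lebesgue_on (cell L)) \<le>
      (\<integral>\<^sup>+x. ennreal ((1/2) * (norm (G x))^2 + Fdw (m x)) \<partial>lebesgue_on (cell L))"
      by (intro nn_integral_mono ennreal_leI) simp
  qed
  finally show ?thesis .
qed

lemma per_int:
  assumes "periodic L f"
  shows "f (z + (real_of_int k * L) *\<^sub>R axis i 1) = f z"
proof -
  have nat: "f (z + (real n * L) *\<^sub>R axis i 1) = f z" for n z
  proof (induction n arbitrary: z)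
    case (Suc n)
    have "f (z + (real (Suc n) * L) *\<^sub>R axis i 1) = f ((z + (real n * L) *\<^sub>R axis i 1) + L *\<^sub>R axis i 1)"
      by (simp add: algebra_simps)
    also have "\<dots> = f z" using assms Suc unfolding periodic_def by simp
    finally show ?case .
  qed simp
  show ?thesis
  proof (cases "k \<ge> 0")
    case True
    then show ?thesis using nat[where n="nat k" and z=z] by simp
  next
    case False
    have "f z = f ((z + (real_of_int k * L) *\<^sub>R axis i 1) + (real (nat (-k)) * L) *\<^sub>R axis i 1)"
      using False by (simp add: algebra_simps)
    then show ?thesis using nat by simp
  qed
qed

lemma per_reduce:
  fixes f :: "real^'d::finite \<Rightarrow> 'a"
  assumes "periodic L f" "L > 0"
  shows "\<exists>y\<in>cell L. f x = f y"
proof -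
  define k where "k j = \<lfloor>x $ j / L\<rfloor>" for j
  define y where "y = x - (\<Sum>j\<in>UNIV. (real_of_int (k j) * L) *\<^sub>R axis j 1)"
  have sumS: "f (z + (\<Sum>j\<in>S. (real_of_int (k j) * L) *\<^sub>R axis j (1::real))) = f z" if "finite S" for z S
    using that
  proof (induction S arbitrary: z rule: finite_induct)
    case (insert a S)
    have "f (z + (\<Sum>j\<in>insert a S. (real_of_int (k j) * L) *\<^sub>R axis j 1))
       = f ((z + (\<Sum>j\<in>S. (real_of_int (k j) * L) *\<^sub>R axis j 1)) + (real_of_int (k a) * L) *\<^sub>R axis a 1)"
      using insert by (simp add: algebra_simps)
    also have "\<dots> = f z" using per_int[OF assms(1)] insert by simp
    finally show ?case .
  qed simp
  have "f x = f y" using sumS[of UNIV y] by (simp add: y_def)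
  moreover have "y \<in> cell L"
  proof -
    have "0 \<le> y $ j \<and> y $ j \<le> L" for j
    proof -
      have yj: "y $ j = x $ j - real_of_int (k j) * L"
        by (simp add: y_def axis_def if_distrib cong: if_cong)
      have a: "real_of_int (k j) \<le> x $ j / L" "x $ j / L < real_of_int (k j) + 1"
        unfolding k_def by linarith+
      have "real_of_int (k j) * L \<le> x $ j" using a(1) assms(2) by (simp add: field_simps)
      moreover have "x $ j < (real_of_int (k j) + 1) * L" using a(2) assms(2) by (simp add: field_simps)
      ultimately show ?thesis unfolding yj by (simp add: algebra_simps)
    qed
    then show ?thesis unfolding cell_def by (simp add: mem_box_cart)
  qed
  ultimately show ?thesis by blast
qed



lemma Fdw_expand: "Fdw y - Fdw n - (n^3 - n) * (y - n) = 1/4 * (y - n)^2 * ((y + n)^2 - 2 * (1 - n^2))"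
  unfolding Fdw_def by (simp add: power2_eq_square power3_eq_cube field_simps) 

lemma q_pos:
  fixes y n :: real
  assumes "-1 < n" "n < 1" "y < 1 - (n + 1) - 2 * sqrt (n + 1) * sqrt (1 - (n + 1) / 2)"
  shows "(y + n)^2 - 2 * (1 - n^2) > 0"
proof -
  define a where "a = sqrt (n + 1)"
  define b where "b = sqrt (1 - (n + 1) / 2)"
  have a2: "a^2 = n + 1" using assms unfolding a_def by simp
  have b2: "b^2 = 1 - (n + 1) / 2" using assms unfolding b_def by simp
  have ab: "0 \<le> 2 * a * b" unfolding a_def b_def using assms by (intro mult_nonneg_nonneg) auto
  have lt: "2 * a * b < -(y + n)" using assms(3) unfolding a_def b_def by linarith
  have "(2 * a * b)^2 < (-(y + n))^2" by (rule power_strict_mono[OF lt ab]) simp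
  also have "(-(y + n))^2 = (y + n)^2" by (rule power2_minus)
  finally have 1: "(2 * a * b)^2 < (y + n)^2" .
  have "(2 * a * b)^2 = 4 * a^2 * b^2" by (simp add: power_mult_distrib)
  also have "\<dots> = 4 * (n + 1) * (1 - (n + 1) / 2)" using a2 b2 by simp
  finally have "4 * (n + 1) * (1 - (n + 1) / 2) < (y + n)^2" using 1 by simp
  moreover have "4 * (n + 1) * (1 - (n + 1) / 2) = 2 * (1 - n^2)" by (simp add: field_simps power2_eq_square)
  ultimately show ?thesis by linarith
qed

theorem lemma3p2:
  fixes L n :: real and m :: "real^'d::finite \<Rightarrow> real"
  assumes "CARD('d) \<ge> 2" and "L > 0"
    and "-1 < n" and "n < 1"
    and "minimizer L n m"
    and "continuous_on UNIV m"
    and "\<exists>x y. m x \<noteq> m y"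
  shows "(SUP x \<in> cell L. m x) \<ge> 1 - (n + 1) - 2 * sqrt (n + 1) * sqrt (1 - (n + 1) / 2)"
proof (rule ccontr)
  assume "\<not> ?thesis"
  then have lt: "(SUP x \<in> cell L. m x) < 1 - (n + 1) - 2 * sqrt (n + 1) * sqrt (1 - (n + 1) / 2)"
    by simp
  define C :: "(real^'d) set" where "C = cell L"
  define V where "V = L ^ CARD('d)"
  have Vpos: "V > 0" unfolding V_def using assms(2) by simp
  have adm: "admissible L n m" and en: "energy L m = fL TYPE('d) L n"
    using assms(5) unfolding minimizer_def by auto
  have per: "periodic L m" using adm unfolding admissible_def H1_def by auto
  have cm: "continuous_on C m" using assms(6) continuous_on_subset by blast
  have cF: "continuous_on C (\<lambda>x. Fdw (m x))" unfolding Fdw_def by (intro continuous_intros cm)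
  have "fL TYPE('d) L n \<le> energy L (\<lambda>_::real^'d. n)"
    unfolding fL_def by (rule INF_lower) (simp add: const_admissible[OF assms(2)])
  also have "\<dots> \<le> ennreal (Fdw n * V)" unfolding V_def by (rule energy_const_le[OF assms(2)])
  finally have "ennreal (integral C (\<lambda>x. Fdw (m x))) \<le> ennreal (Fdw n * V)"
    using energy_ge[of L m] cm en unfolding C_def by (metis order_trans)
  then have IF: "integral C (\<lambda>x. Fdw (m x)) \<le> Fdw n * V"
    using Vpos by (subst (asm) ennreal_le_iff) (auto simp: Fdw_def)
  have Im: "integral C m = n * V"
  proof -
    have e1: "(\<integral>x. m x \<partial>lebesgue_on C) / V = n" using adm unfolding admissible_def C_def V_def by simp
    have e2: "(\<integral>x. m x \<partial>lebesgue_on C) = integral C m" using leb_hk(2)[OF cm[unfolded C_def]] unfolding C_def by simp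
    show ?thesis using e1 e2 Vpos by (simp add: divide_eq_eq)
  qed
  have "compact (m ` C)" by (rule compact_continuous_image[OF cm]) (simp add: C_def cell_def)
  then have bdd: "bdd_above (m ` C)" by (intro bounded_imp_bdd_above compact_imp_bounded)
  have q: "(m x + n)^2 - 2 * (1 - n^2) > 0" if "x \<in> C" for x
  proof -
    have "m x \<le> (SUP x \<in> cell L. m x)" using cSUP_upper[OF that bdd] unfolding C_def .
    then show ?thesis using q_pos[OF assms(3,4)] lt by force
  qed
  define g where "g x = Fdw (m x) - Fdw n - (n^3 - n) * (m x - n)" for x
  have gnn: "g x \<ge> 0" if "x \<in> C" for x
    unfolding g_def Fdw_expand using q[OF that] by simp
  have cg: "continuous_on C g" unfolding g_def by (intro continuous_intros cF cm)
  have h1: "((\<lambda>x. Fdw (m x)) has_integral integral C (\<lambda>x. Fdw (m x))) C"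
    using cF unfolding C_def cell_def by (intro integrable_integral integrable_continuous)
  have h2: "((\<lambda>x. Fdw n) has_integral (V * Fdw n)) C"
    using content_cell[OF assms(2), where 'd='d] has_integral_const[of "Fdw n" "0::real^'d" "\<chi> i. L"]
    unfolding C_def V_def cell_def by simp
  have h3: "(m has_integral (n * V)) C"
    using cm Im unfolding C_def cell_def by (metis has_integral_integral integrable_continuous)
  have h4: "((\<lambda>x. n) has_integral (V * n)) C"
    using content_cell[OF assms(2), where 'd='d] has_integral_const[of n "0::real^'d" "\<chi> i. L"]
    unfolding C_def V_def cell_def by simp
  have "((\<lambda>x. m x - n) has_integral (n * V - V * n)) C" by (rule has_integral_diff[OF h3 h4])
  then have h5: "((\<lambda>x. (n^3 - n) * (m x - n)) has_integral 0) C"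
    using has_integral_mult_right[of "\<lambda>x. m x - n" "n * V - V * n" C "n^3 - n"] by simp
  have hg: "(g has_integral (integral C (\<lambda>x. Fdw (m x)) - V * Fdw n - 0)) C"
    unfolding g_def by (intro has_integral_diff h1 h2 h5)
  have "integral C (\<lambda>x. Fdw (m x)) - V * Fdw n - 0 \<ge> 0"
    by (rule has_integral_nonneg[OF hg gnn])
  then have "integral C (\<lambda>x. Fdw (m x)) - V * Fdw n - 0 = 0" using IF by (simp add: mult.commute)
  then have hg0: "(g has_integral 0) (cbox 0 (\<chi> i. L))" using hg unfolding C_def cell_def by simp
  have bne: "box 0 (\<chi> i. L) \<noteq> ({} :: (real^'d) set)"
  proof -
    have "(\<chi> i. L / 2) \<in> box 0 (\<chi> i. L :: real^'d)" using assms(2) by (simp add: mem_box_cart)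
    then show ?thesis by blast
  qed
  have mc: "m x = n" if "x \<in> C" for x
  proof -
    have "g x = 0"
      by (rule has_integral_0_cbox_imp_0[OF cg[unfolded C_def cell_def] _ hg0 bne that[unfolded C_def cell_def]])
         (use gnn box_subset_cbox in \<open>auto simp: C_def cell_def\<close>)
    then have "1/4 * (m x - n)^2 * ((m x + n)^2 - 2 * (1 - n^2)) = 0" unfolding g_def Fdw_expand .
    then show ?thesis using q[OF that] by simp
  qed
  obtain x y where "m x \<noteq> m y" using assms(7) by blast
  moreover obtain x' where "x' \<in> C" "m x = m x'" using per_reduce[OF per assms(2)] unfolding C_def by blast
  moreover obtain y' where "y' \<in> C" "m y = m y'" using per_reduce[OF per assms(2)] unfolding C_def by blast
  ultimately show False using mc by simp
qed

end
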